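(* Let $G$ be a BDH graph with color classes $X$ and $Y$ and with no universal vertex, and let $\mathcal{B}(G)$ be its set of maximal bicliques. Let $\mathcal{X}_G=(X(B)\mid B\in\mathcal{B}(G))$ and $\mathcal{Y}_G=(Y(B)\mid B\in\mathcal{B}(G))$, regarded as families (hypergraphs) on $X$ and on $Y$ respectively. Then the incidence bipartite graphs $\Gamma(\mathcal{X}_G)$ and $\Gamma(\mathcal{Y}_G)$ are BDH graphs.
   Context: A biclique of a bipartite graph is a vertex set $B$ inducing a complete bipartite subgraph, with shores $X(B)=B\cap X$, $Y(B)=B\cap Y$; $\mathcal{B}(G)$ is the set of inclusion-wise maximal bicliques. For a family $\mathcal{H}$ of subsets of a ground set $V$, $\Gamma(\mathcal{H})$ is the bipartite graph with color classes $V$ and $\mathcal{H}$ (one vertex per member of the family), in which $v\in V$ is adjacent to $F\in\mathcal{H}$ iff $v\in F$. A universal vertex is one adjacent to all vertices of the opposite color class. A graph is distance hereditary if distances in every connected induced subgraph equal distances in the graph; BDH means bipartite distance hereditary (equivalently: bipartite, with no induced chordless cycle of length $\ge6$ and no induced domino, a domino being $C_6$ plus one chord between antipodal vertices). *)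

theory Defs
  imports Main
begin

definition walk_len :: "('a \<Rightarrow> 'a \<Rightarrow> bool) \<Rightarrow> 'a set \<Rightarrow> 'a \<Rightarrow> 'a \<Rightarrow> nat \<Rightarrow> bool" where
  "walk_len E S u v n \<longleftrightarrow> (\<exists>ps. length ps = Suc n \<and> hd ps = u \<and> last ps = v \<and> set ps \<subseteq> S
      \<and> (\<forall>i<n. E (ps ! i) (ps ! Suc i)))"

definition dist_in :: "('a \<Rightarrow> 'a \<Rightarrow> bool) \<Rightarrow> 'a set \<Rightarrow> 'a \<Rightarrow> 'a \<Rightarrow> nat" where
  "dist_in E S u v = (LEAST n. walk_len E S u v n)"

definition connected_in :: "('a \<Rightarrow> 'a \<Rightarrow> bool) \<Rightarrow> 'a set \<Rightarrow> bool" where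
  "connected_in E S \<longleftrightarrow> (\<forall>u\<in>S. \<forall>v\<in>S. \<exists>n. walk_len E S u v n)"

definition distance_hereditary :: "'a set \<Rightarrow> ('a \<Rightarrow> 'a \<Rightarrow> bool) \<Rightarrow> bool" where
  "distance_hereditary V E \<longleftrightarrow>
     (\<forall>S\<subseteq>V. connected_in E S \<longrightarrow> (\<forall>u\<in>S. \<forall>v\<in>S. dist_in E S u v = dist_in E V u v))"

definition bipartite_graph :: "'a set \<Rightarrow> 'a set \<Rightarrow> ('a \<Rightarrow> 'a \<Rightarrow> bool) \<Rightarrow> bool" where
  "bipartite_graph X Y E \<longleftrightarrow> finite X \<and> finite Y \<and> X \<inter> Y = {}
     \<and> (\<forall>u v. E u v \<longrightarrow> E v u)
     \<and> (\<forall>u v. E u v \<longrightarrow> (u \<in> X \<and> v \<in> Y) \<or> (u \<in> Y \<and> v \<in> X))"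

definition BDH :: "'a set \<Rightarrow> 'a set \<Rightarrow> ('a \<Rightarrow> 'a \<Rightarrow> bool) \<Rightarrow> bool" where
  "BDH X Y E \<longleftrightarrow> bipartite_graph X Y E \<and> distance_hereditary (X \<union> Y) E"

definition biclique :: "'a set \<Rightarrow> 'a set \<Rightarrow> ('a \<Rightarrow> 'a \<Rightarrow> bool) \<Rightarrow> 'a set \<Rightarrow> bool" where
  "biclique X Y E B \<longleftrightarrow> B \<subseteq> X \<union> Y \<and> B \<inter> X \<noteq> {} \<and> B \<inter> Y \<noteq> {}
     \<and> (\<forall>x\<in>B \<inter> X. \<forall>y\<in>B \<inter> Y. E x y)"

definition max_bicliques :: "'a set \<Rightarrow> 'a set \<Rightarrow> ('a \<Rightarrow> 'a \<Rightarrow> bool) \<Rightarrow> 'a set set" where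
  "max_bicliques X Y E = {B. biclique X Y E B \<and> \<not> (\<exists>B'. biclique X Y E B' \<and> B \<subset> B')}"

definition universal_vertex :: "'a set \<Rightarrow> 'a set \<Rightarrow> ('a \<Rightarrow> 'a \<Rightarrow> bool) \<Rightarrow> 'a \<Rightarrow> bool" where
  "universal_vertex X Y E v \<longleftrightarrow> (v \<in> X \<and> (\<forall>y\<in>Y. E v y)) \<or> (v \<in> Y \<and> (\<forall>x\<in>X. E v x))"

text \<open>Incidence bipartite graph Gamma of the family (F i | i \<in> I) on ground set V:
  colour classes Inl ` V and Inr ` I (one vertex per index), Inl v adjacent to Inr i iff v \<in> F i.\<close>
fun Gamma_adj :: "'a set \<Rightarrow> 'i set \<Rightarrow> ('i \<Rightarrow> 'a set) \<Rightarrow> 'a + 'i \<Rightarrow> 'a + 'i \<Rightarrow> bool" where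
  "Gamma_adj V I F (Inl v) (Inr i) = (v \<in> V \<and> i \<in> I \<and> v \<in> F i)"
| "Gamma_adj V I F (Inr i) (Inl v) = (v \<in> V \<and> i \<in> I \<and> v \<in> F i)"
| "Gamma_adj V I F _ _ = False"

end

theory Submission
  imports Defs
begin


inductive wk :: "('a \<Rightarrow> 'a \<Rightarrow> bool) \<Rightarrow> 'a set \<Rightarrow> 'a \<Rightarrow> 'a \<Rightarrow> nat \<Rightarrow> bool"
  for E S where
  wk0: "u \<in> S \<Longrightarrow> wk E S u u 0"
| wkS: "u \<in> S \<Longrightarrow> E u w \<Longrightarrow> wk E S w v n \<Longrightarrow> wk E S u v (Suc n)"

lemma wk_in: "wk E S u v n \<Longrightarrow> u \<in> S \<and> v \<in> S"
  by (induct rule: wk.induct) auto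

lemma wk_trans: "wk E S u w m \<Longrightarrow> wk E S w v n \<Longrightarrow> wk E S u v (m+n)"
  by (induct rule: wk.induct) (auto intro: wk.intros)

lemma wk_mono: "wk E S u v n \<Longrightarrow> S \<subseteq> T \<Longrightarrow> wk E T u v n"
  by (induct rule: wk.induct) (auto intro: wk.intros)

lemma wk_hom: "wk E S u v n \<Longrightarrow> (\<forall>a\<in>S. \<forall>b\<in>S. E a b \<longrightarrow> E' (g a) (g b)) \<Longrightarrow> g ` S \<subseteq> T
   \<Longrightarrow> wk E' T (g u) (g v) n"
proof (induct rule: wk.induct)
  case (wk0 u) then show ?case by (auto intro: wk.intros)
next
  case (wkS u w v n)
  then show ?case using wk_in[OF wkS(3)] by (auto intro!: wk.intros)
qed

lemma wk_sym: assumes sy: "\<forall>a b. E a b \<longrightarrow> E b a" and w: "wk E S u v n" shows "wk E S v u n"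
  using w
proof (induct rule: wk.induct)
  case (wk0 u) then show ?case by (auto intro: wk.intros)
next
  case (wkS u w v n)
  have "wk E S w u 1" using wkS sy by (auto intro!: wk.intros dest: wk_in)
  from wk_trans[OF wkS(4) this] show ?case by simp
qed

lemma wk_0: "wk E S u v 0 \<Longrightarrow> u = v"
  by (erule wk.cases) auto

lemma wk_1: "wk E S u v (Suc 0) \<Longrightarrow> E u v"
  by (erule wk.cases) (auto dest: wk_0)

definition lw :: "('a \<Rightarrow> 'a \<Rightarrow> bool) \<Rightarrow> 'a set \<Rightarrow> 'a list \<Rightarrow> bool" where
  "lw E S ps \<longleftrightarrow> set ps \<subseteq> S \<and> (\<forall>i. Suc i < length ps \<longrightarrow> E (ps!i) (ps!Suc i))"

lemma lw_sub_aux: "lw E S ps \<Longrightarrow> a + d < length ps \<Longrightarrow> wk E S (ps!a) (ps!(a+d)) d"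
proof (induct d arbitrary: a)
  case 0
  have "ps!a \<in> S" using 0 nth_mem[of a ps] by (auto simp: lw_def)
  then show ?case by (simp add: wk0)
next
  case (Suc d)
  have "wk E S (ps!Suc a) (ps!(Suc a + d)) d" using Suc(1)[of "Suc a"] Suc(2,3) by simp
  moreover have "ps!a \<in> S" "E (ps!a) (ps!Suc a)" using Suc(2,3) by (auto simp: lw_def)
  ultimately show ?case by (auto intro: wk.intros)
qed

lemma lw_sub: "lw E S ps \<Longrightarrow> a \<le> b \<Longrightarrow> b < length ps \<Longrightarrow> wk E S (ps!a) (ps!b) (b-a)"
  using lw_sub_aux[of E S ps a "b-a"] by auto

lemma walk_len_lw: "walk_len E S u v n \<longleftrightarrow> (\<exists>ps. length ps = Suc n \<and> ps!0 = u \<and> ps!n = v \<and> lw E S ps)"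
proof -
  have hl: "hd ps = ps!0 \<and> last ps = ps!n" if "length ps = Suc n" for ps :: "'a list"
  proof -
    have "ps \<noteq> []" using that by auto
    then show ?thesis using that by (simp add: hd_conv_nth last_conv_nth)
  qed
  have ed: "(\<forall>i<n. E (ps ! i) (ps ! Suc i)) \<longleftrightarrow> (\<forall>i. Suc i < length ps \<longrightarrow> E (ps!i) (ps!Suc i))"
    if "length ps = Suc n" for ps :: "'a list" using that by auto
  show ?thesis unfolding walk_len_def lw_def
  proof
    assume "\<exists>ps. length ps = Suc n \<and> hd ps = u \<and> last ps = v \<and> set ps \<subseteq> S \<and> (\<forall>i<n. E (ps ! i) (ps ! Suc i))"
    then obtain ps where p: "length ps = Suc n" "hd ps = u" "last ps = v" "set ps \<subseteq> S" "\<forall>i<n. E (ps ! i) (ps ! Suc i)" by blast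
    have "ps!0 = u" "ps!n = v" using hl[OF p(1)] p(2,3) by simp_all
    moreover have "\<forall>i. Suc i < length ps \<longrightarrow> E (ps ! i) (ps ! Suc i)" using ed[OF p(1)] p(5) by blast
    ultimately show "\<exists>ps. length ps = Suc n \<and> ps ! 0 = u \<and> ps ! n = v \<and> set ps \<subseteq> S \<and> (\<forall>i. Suc i < length ps \<longrightarrow> E (ps ! i) (ps ! Suc i))"
      using p by blast
  next
    assume "\<exists>ps. length ps = Suc n \<and> ps ! 0 = u \<and> ps ! n = v \<and> set ps \<subseteq> S \<and> (\<forall>i. Suc i < length ps \<longrightarrow> E (ps ! i) (ps ! Suc i))"
    then obtain ps where p: "length ps = Suc n" "ps!0 = u" "ps!n = v" "set ps \<subseteq> S" "\<forall>i. Suc i < length ps \<longrightarrow> E (ps ! i) (ps ! Suc i)" by blast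
    have "hd ps = u" "last ps = v" using hl[OF p(1)] p(2,3) by simp_all
    moreover have "\<forall>i<n. E (ps ! i) (ps ! Suc i)" using ed[OF p(1)] p(5) by blast
    ultimately show "\<exists>ps. length ps = Suc n \<and> hd ps = u \<and> last ps = v \<and> set ps \<subseteq> S \<and> (\<forall>i<n. E (ps ! i) (ps ! Suc i))"
      using p by blast
  qed
qed

lemma walk_len_wk: "walk_len E S u v n \<longleftrightarrow> wk E S u v n"
proof
  assume "walk_len E S u v n"
  then obtain ps where "length ps = Suc n" "ps!0 = u" "ps!n = v" "lw E S ps" by (auto simp: walk_len_lw)
  then show "wk E S u v n" using lw_sub[of E S ps 0 n] by auto
next
  assume "wk E S u v n"
  then show "walk_len E S u v n"
  proof (induct rule: wk.induct)
    case (wk0 u) show ?case unfolding walk_len_lw by (rule exI[of _ "[u]"]) (use wk0 in \<open>auto simp: lw_def\<close>)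
  next
    case (wkS u w v n)
    then obtain ps where ps: "length ps = Suc n" "ps!0 = w" "ps!n = v" "lw E S ps" by (auto simp: walk_len_lw)
    show ?case unfolding walk_len_lw
    proof (rule exI[of _ "u#ps"], intro conjI)
      show "lw E S (u#ps)" using ps wkS unfolding lw_def
        by (auto simp: nth_Cons split: nat.splits)
    qed (use ps in auto)
  qed
qed

definition ipath :: "('a \<Rightarrow> 'a \<Rightarrow> bool) \<Rightarrow> 'a set \<Rightarrow> 'a list \<Rightarrow> bool" where
  "ipath E S ps \<longleftrightarrow> ps \<noteq> [] \<and> lw E S ps \<and> distinct ps \<and>
     (\<forall>a b. a < length ps \<longrightarrow> b < length ps \<longrightarrow> E (ps!a) (ps!b) \<longrightarrow> a = Suc b \<or> b = Suc a)"

lemma L1: "wk E T u v m \<Longrightarrow> ipath E S ps \<Longrightarrow> T \<subseteq> set ps \<Longrightarrow> a < length ps \<Longrightarrow> u = ps!a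
   \<Longrightarrow> b < length ps \<Longrightarrow> v = ps!b \<Longrightarrow> b \<le> a + m"
proof (induct arbitrary: a rule: wk.induct)
  case (wk0 u) then show ?case by (auto simp: ipath_def nth_eq_iff_index_eq)
next
  case (wkS u w v n)
  from wk_in[OF wkS(3)] wkS(6) obtain c where c: "c < length ps" "w = ps!c"
    by (metis in_set_conv_nth subsetD)
  have "b \<le> c + n" using wkS c by auto
  moreover have "a = Suc c \<or> c = Suc a" using wkS c unfolding ipath_def by auto
  ultimately show ?case by auto
qed

lemma ipath_conn:
  assumes "\<forall>a b. E a b \<longrightarrow> E b a" "lw E S ps"
  shows "connected_in E (set ps)"
proof -
  have lw: "lw E (set ps) ps" using assms by (auto simp: lw_def)
  show ?thesis unfolding connected_in_def walk_len_wk
  proof (intro ballI)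
    fix u v assume "u \<in> set ps" "v \<in> set ps"
    then obtain a b where ab: "a < length ps" "b < length ps" "u = ps!a" "v = ps!b"
      by (auto simp: in_set_conv_nth)
    show "\<exists>n. wk E (set ps) u v n"
    proof (cases "a \<le> b")
      case True then show ?thesis using lw_sub[OF lw True ab(2)] ab by auto
    next
      case False then show ?thesis using wk_sym[OF assms(1), OF lw_sub[OF lw _ ab(1), of b]] ab by auto
    qed
  qed
qed

lemma L3:
  assumes dh: "distance_hereditary V E" and sym: "\<forall>a b. E a b \<longrightarrow> E b a"
    and ip: "ipath E V ps" and w: "wk E V (ps!0) (ps!(length ps - 1)) m"
  shows "length ps - 1 \<le> m"
proof -
  define k where "k = length ps - 1"
  have lwV: "lw E V ps" and ne: "ps \<noteq> []" using ip by (auto simp: ipath_def)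
  have lwS: "lw E (set ps) ps" using lwV by (auto simp: lw_def)
  have SV: "set ps \<subseteq> V" using lwV by (auto simp: lw_def)
  have kl: "k < length ps" using ne by (auto simp: k_def)
  have conn: "connected_in E (set ps)" by (rule ipath_conn[OF sym lwV])
  have "dist_in E (set ps) (ps!0) (ps!k) = k"
    unfolding dist_in_def walk_len_wk
  proof (rule Least_equality)
    show "wk E (set ps) (ps ! 0) (ps ! k) k" using lw_sub[OF lwS _ kl, of 0] by auto
    fix y assume "wk E (set ps) (ps ! 0) (ps ! k) y"
    from L1[OF this ip subset_refl, of 0 k] ne kl show "k \<le> y" by auto
  qed
  moreover have "dist_in E (set ps) (ps!0) (ps!k) = dist_in E V (ps!0) (ps!k)"
    using dh SV conn kl ne unfolding distance_hereditary_def by auto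
  ultimately have "dist_in E V (ps!0) (ps!k) = k" by simp
  moreover have "dist_in E V (ps!0) (ps!k) \<le> m"
    unfolding dist_in_def walk_len_wk by (rule Least_le) (use w k_def in simp)
  ultimately show ?thesis by (simp add: k_def)
qed

lemma SC:
  assumes sym: "\<forall>a b. E a b \<longrightarrow> E b a" and nl: "\<forall>a. \<not> E a a"
    and lw: "lw E S ps" and len: "length ps = Suc n"
    and mn: "\<forall>m<n. \<not> wk E S (ps!0) (ps!n) m"
  shows "ipath E S ps"
proof -
  have dist: "distinct ps"
  proof (rule ccontr)
    assume "\<not> distinct ps"
    then obtain a b where ab: "a < b" "b < length ps" "ps!a = ps!b"
      by (metis distinct_conv_nth linorder_neqE_nat)
    have "wk E S (ps!0) (ps!a) a" using lw_sub[OF lw, of 0 a] ab by auto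
    moreover have "wk E S (ps!b) (ps!n) (n-b)" using lw_sub[OF lw, of b n] ab len by auto
    ultimately have "wk E S (ps!0) (ps!n) (a + (n-b))" using ab wk_trans by metis
    then show False using mn ab len by auto
  qed
  have ch: "a = Suc b \<or> b = Suc a" if "a < length ps" "b < length ps" "E (ps!a) (ps!b)" for a b
  proof -
    have gen: "False" if "a < b" "b \<noteq> Suc a" "b < length ps" "E (ps!a) (ps!b)" for a b
    proof -
      have "wk E S (ps!0) (ps!a) a" using lw_sub[OF lw, of 0 a] that by auto
      have "wk E S (ps!b) (ps!n) (n-b)" using lw_sub[OF lw, of b n] that len by auto
      moreover have "ps!a \<in> S" using lw that by (auto simp: lw_def)
      ultimately have "wk E S (ps!a) (ps!n) (Suc (n-b))" using that(4) by (simp add: wkS)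
      with \<open>wk E S (ps!0) (ps!a) a\<close> have "wk E S (ps!0) (ps!n) (a + Suc (n-b))" by (rule wk_trans)
      then show False using mn that len by auto
    qed
    show ?thesis
    proof (rule ccontr)
      assume h: "\<not> (a = Suc b \<or> b = Suc a)"
      have "a \<noteq> b" using that nl by auto
      then consider "a < b" | "b < a" by linarith
      then show False
      proof cases
        case 1
        have "b \<noteq> Suc a" using h by blast
        then show False using gen[of a b] 1 that by blast
      next
        case 2
        have "a \<noteq> Suc b" using h by blast
        moreover have "E (ps!b) (ps!a)" using sym that(3) by blast
        ultimately show False using gen[of b a] 2 that by blast
      qed
    qed
  qed
  show ?thesis unfolding ipath_def using dist ch lw len by auto
qed

lemma ipath_sub:
  assumes ip: "ipath E S ps" and ab: "a \<le> b" "b < length ps"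
  shows "ipath E S (drop a (take (Suc b) ps)) \<and> length (drop a (take (Suc b) ps)) = Suc (b-a)
     \<and> (\<forall>i. i \<le> b - a \<longrightarrow> (drop a (take (Suc b) ps))!i = ps!(a+i))"
proof -
  let ?q = "drop a (take (Suc b) ps)"
  have len: "length ?q = Suc (b-a)" using ab by auto
  have nth: "\<And>i. i < length ?q \<Longrightarrow> ?q!i = ps!(a+i)" using ab by auto
  have "ipath E S ?q" unfolding ipath_def
  proof (intro conjI allI impI)
    show "?q \<noteq> []" using len by auto
    show "distinct ?q" using ip by (auto simp: ipath_def)
    have "set ?q \<subseteq> set ps" by (meson order_trans set_drop_subset set_take_subset)
    moreover have "E (?q!i) (?q!Suc i)" if "Suc i < length ?q" for i
    proof -
      have "?q!i = ps!(a+i)" "?q!Suc i = ps!Suc (a+i)" using nth[of i] nth[of "Suc i"] that by auto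
      moreover have "Suc (a+i) < length ps" using that len ab by linarith
      ultimately show ?thesis using ip unfolding ipath_def lw_def by auto
    qed
    ultimately show "lw E S ?q" using ip unfolding ipath_def lw_def by blast
  next
    fix i j assume ij: "i < length ?q" "j < length ?q" "E (?q!i) (?q!j)"
    have "a + i < length ps" "a + j < length ps" using ij len ab by linarith+
    moreover have "E (ps!(a+i)) (ps!(a+j))" using ij nth by auto
    ultimately have "a + i = Suc (a + j) \<or> a + j = Suc (a + i)" using ip unfolding ipath_def by blast
    then show "i = Suc j \<or> j = Suc i" by linarith
  qed
  then show ?thesis using len nth by auto
qed



lemma GA: "Gamma_adj V I F u w \<longleftrightarrow> (\<exists>x B. ((u = Inl x \<and> w = Inr B) \<or> (u = Inr B \<and> w = Inl x)) \<and> x \<in> V \<and> B \<in> I \<and> x \<in> F B)"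
  by (cases u; cases w) auto

locale GG =
  fixes X Y :: "'a set" and E :: "'a \<Rightarrow> 'a \<Rightarrow> bool"
  assumes bip: "bipartite_graph X Y E" and dh: "distance_hereditary (X \<union> Y) E"

context GG
begin

abbreviation "MB \<equiv> max_bicliques X Y E"
abbreviation "VH \<equiv> Inl ` X \<union> Inr ` MB"
abbreviation "EH \<equiv> Gamma_adj X MB (\<lambda>B. B \<inter> X)"

lemma finX: "finite X" and finY: "finite Y" and disj: "X \<inter> Y = {}"
  and symE: "\<forall>u v. E u v \<longrightarrow> E v u"
  and sideE: "\<And>u v. E u v \<Longrightarrow> (u \<in> X \<and> v \<in> Y) \<or> (u \<in> Y \<and> v \<in> X)"
  using bip unfolding bipartite_graph_def by auto

lemma EH_sym: "\<forall>u w. EH u w \<longrightarrow> EH w u" by (auto simp: GA)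
lemma EH_nl: "\<forall>u. \<not> EH u u" by (auto simp: GA)

lemma mb_bic: "B \<in> MB \<Longrightarrow> biclique X Y E B"
  by (simp add: max_bicliques_def)

lemma bic_E: "B \<in> MB \<Longrightarrow> x \<in> B \<Longrightarrow> x \<in> X \<Longrightarrow> y \<in> B \<Longrightarrow> y \<in> Y \<Longrightarrow> E x y"
  using mb_bic unfolding biclique_def by blast

lemma mb_sub: "B \<in> MB \<Longrightarrow> B \<subseteq> X \<union> Y"
  using mb_bic unfolding biclique_def by blast

lemma finMB: "finite MB"
proof -
  have "MB \<subseteq> Pow (X \<union> Y)" using mb_sub by auto
  then show ?thesis using finX finY by (meson finite_Pow_iff finite_UnI finite_subset)
qed

lemma mb_ext:
  assumes b0: "biclique X Y E B0" shows "\<exists>B\<in>MB. B0 \<subseteq> B"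
proof -
  define C where "C = {B. biclique X Y E B \<and> B0 \<subseteq> B}"
  have fC: "finite C"
  proof -
    have "C \<subseteq> Pow (X \<union> Y)" unfolding C_def biclique_def by auto
    then show ?thesis using finX finY by (meson finite_Pow_iff finite_UnI finite_subset)
  qed
  have neC: "B0 \<in> C" using b0 by (simp add: C_def)
  define M where "M = Max (card ` C)"
  have "M \<in> card ` C" unfolding M_def using fC neC by (intro Max_in) auto
  then obtain B where B: "B \<in> C" "card B = M" by auto
  have le: "card B' \<le> M" if "B' \<in> C" for B' unfolding M_def using fC that by (intro Max_ge) auto
  have "B \<in> MB"
  proof -
    have "biclique X Y E B" using B by (simp add: C_def)
    moreover have "\<not> (\<exists>B'. biclique X Y E B' \<and> B \<subset> B')"
    proof
      assume "\<exists>B'. biclique X Y E B' \<and> B \<subset> B'"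
      then obtain B' where B': "biclique X Y E B'" "B \<subset> B'" by blast
      have "finite B'" using B' finX finY unfolding biclique_def by (meson finite_UnI finite_subset)
      then have "card B < card B'" using B' by (simp add: psubset_card_mono)
      moreover have "B' \<in> C" using B' B by (auto simp: C_def)
      ultimately show False using le B by fastforce
    qed
    ultimately show ?thesis by (simp add: max_bicliques_def)
  qed
  then show ?thesis using B by (auto simp: C_def)
qed

lemma mb_notin:
  assumes B: "B \<in> MB" and x: "x \<in> X" "x \<notin> B"
  shows "\<exists>y. y \<in> B \<and> y \<in> Y \<and> \<not> E x y"
proof (rule ccontr)
  assume h: "\<not> (\<exists>y. y \<in> B \<and> y \<in> Y \<and> \<not> E x y)"
  have bB: "biclique X Y E B" using B by (rule mb_bic)
  have xY: "x \<notin> Y" using x disj by auto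
  have "biclique X Y E (insert x B)"
    using bB h x xY unfolding biclique_def by auto
  moreover have "B \<subset> insert x B" using x by auto
  ultimately show False using B unfolding max_bicliques_def by blast
qed

lemma walk2:
  assumes "x \<in> X" "x' \<in> X" "y \<in> Y" "E x y" "E x' y"
  shows "wk EH VH (Inl x) (Inl x') 2"
proof -
  have xy: "x \<notin> Y" "x' \<notin> Y" "y \<notin> X" using assms disj by auto
  have "biclique X Y E {x, x', y}" using assms xy unfolding biclique_def by auto
  then obtain B where B: "B \<in> MB" "{x, x', y} \<subseteq> B" using mb_ext by blast
  have e1: "EH (Inl x) (Inr B)" using B assms by auto
  have e2: "EH (Inr B) (Inl x')" using B assms by auto
  have w0: "wk EH VH (Inl x') (Inl x') 0" using assms by (auto intro: wk0)
  have "Inr B \<in> VH" "Inl x \<in> VH" using B assms by auto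
  from wkS[OF this(2) e1 wkS[OF this(1) e2 w0]]
  have "wk EH VH (Inl x) (Inl x') (Suc (Suc 0))" .
  then show ?thesis by (simp add: numeral_2_eq_2)
qed

end


context GG
begin

lemma MH:
  "ipath EH VH ps \<Longrightarrow> wk EH VH (ps!0) (ps!(length ps - 1)) m \<Longrightarrow> length ps - 1 \<le> m"
proof (induction "length ps" arbitrary: ps m rule: less_induct)
  case less
  define k where "k = length ps - 1"
  have ip: "ipath EH VH ps" using less.prems(1) .
  have ne: "ps \<noteq> []" using ip by (simp add: ipath_def)
  have len: "length ps = Suc k" using ne by (simp add: k_def)
  have wm: "wk EH VH (ps!0) (ps!k) m" using less.prems(2) by (simp add: k_def)
  have inV: "\<And>i. i \<le> k \<Longrightarrow> ps!i \<in> VH"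
    using ip len unfolding ipath_def lw_def by (metis less_Suc_eq_le nth_mem subsetD)
  have edge: "\<And>i. Suc i \<le> k \<Longrightarrow> EH (ps!i) (ps!Suc i)"
    using ip len unfolding ipath_def lw_def by auto
  have nochord: "\<And>a b. a \<le> k \<Longrightarrow> b \<le> k \<Longrightarrow> EH (ps!a) (ps!b) \<Longrightarrow> a = Suc b \<or> b = Suc a"
    using ip len unfolding ipath_def by auto
  have dst: "\<And>a b. a \<le> k \<Longrightarrow> b \<le> k \<Longrightarrow> ps!a = ps!b \<Longrightarrow> a = b"
    using ip len unfolding ipath_def by (simp add: nth_eq_iff_index_eq)
  have IH': "b - a \<le> m'" if "a \<le> b" "b \<le> k" "b - a < k" "wk EH VH (ps!a) (ps!b) m'" for a b m'
  proof -
    let ?q = "drop a (take (Suc b) ps)"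
    have bl: "b < length ps" using that len by auto
    note sub = ipath_sub[OF ip that(1) bl]
    have q0: "?q!0 = ps!a" and qe: "?q!(length ?q - 1) = ps!b" using sub that(1) by auto
    have "length ?q < length ps" using sub that len by auto
    from less.hyps[OF this] sub q0 qe that(4) show ?thesis by auto
  qed
  show "length ps - 1 \<le> m"
  proof (cases "3 \<le> k")
    case False
    consider "m = 0" | "m = 1" | "2 \<le> m" by linarith
    then show ?thesis
    proof cases
      case 1
      then have "ps!0 = ps!k" using wm wk_0 by metis
      then have "k = 0" using dst by auto
      then show ?thesis by (simp add: k_def)
    next
      case 2
      then have "EH (ps!0) (ps!k)" using wm wk_1 by (metis One_nat_def)
      then have "k = 1" using nochord[of 0 k] by auto
      then show ?thesis using 2 by (simp add: k_def)
    next
      case 3 then show ?thesis using False by (simp add: k_def)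
    qed
  next
    case k3: True
    have nbrR: "\<exists>x. ps!Suc i = Inl x \<and> x \<in> X \<and> x \<in> B \<and> B \<in> MB" if "i < k" "ps!i = Inr B" for i B
      using edge[of i] that by (auto simp: GA)
    have nbrL: "\<exists>x. ps!(i-1) = Inl x \<and> x \<in> X \<and> x \<in> B \<and> B \<in> MB" if "0 < i" "i \<le> k" "ps!i = Inr B" for i B
      using edge[of "i-1"] that by (auto simp: GA)
    have notLL: False if "Suc j \<le> k" "ps!j = Inl a" "ps!Suc j = Inl b" for j a b
      using edge[of j] that by (auto simp: GA)
    have inX: "x \<in> X" if "l \<le> k" "ps!l = Inl x" for l x
      using inV[of l] that by auto
    have inMB: "B \<in> MB" if "l \<le> k" "ps!l = Inr B" for l B
      using inV[of l] that by auto
    have close: "b - a \<le> 2" if "a \<le> b" "b \<le> k" "b - a < k" "ps!a = Inl xa" "ps!b = Inl xb"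
      "y \<in> Y" "E xa y" "E xb y" for a b xa xb y
    proof -
      have "wk EH VH (Inl xa) (Inl xb) 2"
        using walk2[of xa xb y] that inX[of a xa] inX[of b xb] by auto
      then show ?thesis using IH'[OF that(1-3)] that(4,5) by auto
    qed
    define e where "e i = (if i = 0 \<or> (i = 1 \<and> k = 4) then i + 3 else i - 3)" for i :: nat
    have C: "l = e i" if hC: "i \<le> k" "ps!i = Inr B" "y \<in> B" "y \<in> Y" "l \<le> k" "ps!l = Inl x"
      "E y x" "l \<noteq> Suc i" "i \<noteq> Suc l" for i B y l x
    proof -
      have B: "B \<in> MB" using inMB hC by blast
      have xX: "x \<in> X" using inX hC by blast
      have Exy: "E x y" using symE hC(7) by blast
      have "l \<noteq> i" using hC by auto
      then consider "Suc i < l" | "Suc l < i" using hC(8,9) by linarith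
      then show ?thesis
      proof cases
        case 1
        then have ik: "i < k" using hC by auto
        obtain x1 where x1: "ps!Suc i = Inl x1" "x1 \<in> X" "x1 \<in> B" using nbrR[OF ik hC(2)] by blast
        have E1: "E x1 y" using bic_E[OF B x1(3) x1(2) hC(3,4)] .
        have "l - Suc i \<le> 2" using close[of "Suc i" l x1 x y] 1 hC x1 E1 Exy by auto
        moreover have "l \<noteq> Suc (Suc i)" using notLL[of "Suc i" x1 x] x1 hC by auto
        ultimately have l3: "l = i + 3" using 1 by linarith
        have "i = 0 \<or> (i = 1 \<and> k = 4)"
        proof (rule ccontr)
          assume h: "\<not> (i = 0 \<or> (i = 1 \<and> k = 4))"
          then have i0: "0 < i" by auto
          obtain x0 where x0: "ps!(i-1) = Inl x0" "x0 \<in> X" "x0 \<in> B" using nbrL[OF i0 hC(1,2)] by blast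
          have E0: "E x0 y" using bic_E[OF B x0(3) x0(2) hC(3,4)] .
          show False
          proof (cases "l - (i - 1) < k")
            case True
            have "l - (i-1) \<le> 2" using close[of "i-1" l x0 x y] True hC x0 E0 Exy l3 by auto
            then show False using l3 i0 by linarith
          next
            case False then show False using h l3 hC(5) i0 by linarith
          qed
        qed
        then show ?thesis using l3 unfolding e_def by auto
      next
        case 2
        then have i0: "0 < i" by auto
        obtain x0 where x0: "ps!(i-1) = Inl x0" "x0 \<in> X" "x0 \<in> B" using nbrL[OF i0 hC(1,2)] by blast
        have E0: "E x0 y" using bic_E[OF B x0(3) x0(2) hC(3,4)] .
        have "(i - 1) - l \<le> 2" using close[of l "i-1" x x0 y] 2 hC x0 E0 Exy by auto
        moreover have "l \<noteq> i - 2" using notLL[of l x x0] x0 hC 2 by (auto simp: Suc_diff_Suc numeral_2_eq_2)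
        ultimately have "l = i - 3" "3 \<le> i" using 2 by linarith+
        then show ?thesis unfolding e_def by auto
      qed
    qed
    define good where "good B y \<longleftrightarrow> (\<forall>i\<le>k. ps!i = Inr B \<longrightarrow> (\<forall>l\<le>k. \<forall>x. ps!l = Inl x \<longrightarrow> E y x \<longrightarrow> l = Suc i \<or> i = Suc l))" for B y
    have exgood: "\<exists>y. y \<in> B \<and> y \<in> Y \<and> good B y" if B: "B \<in> MB" for B
    proof -
      have nY: "\<exists>y. y \<in> B \<and> y \<in> Y" using mb_bic[OF B] unfolding biclique_def by blast
      show ?thesis
      proof (cases "\<exists>i\<le>k. ps!i = Inr B")
        case False
        then show ?thesis using nY unfolding good_def by blast
      next
        case True
        then obtain i where i: "i \<le> k" "ps!i = Inr B" by blast
        have uniq: "i' = i" if "i' \<le> k" "ps!i' = Inr B" for i' using dst[OF that(1) i(1)] that i by auto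
        show ?thesis
        proof (cases "\<exists>x. e i \<le> k \<and> ps!(e i) = Inl x \<and> e i \<noteq> Suc i \<and> i \<noteq> Suc (e i)")
          case True
          then obtain x where x: "e i \<le> k" "ps!(e i) = Inl x" "e i \<noteq> Suc i" "i \<noteq> Suc (e i)" by blast
          have xX: "x \<in> X" using inX x by blast
          have "x \<notin> B"
          proof
            assume "x \<in> B"
            then have "EH (ps!(e i)) (ps!i)" using x i B xX by simp
            then show False using nochord[OF x(1) i(1)] x by auto
          qed
          then obtain y where y: "y \<in> B" "y \<in> Y" "\<not> E x y" using mb_notin[OF B xX] by blast
          have "good B y" unfolding good_def
          proof (intro allI impI)
            fix i' l x' assume h: "i' \<le> k" "ps!i' = Inr B" "l \<le> k" "ps!l = Inl x'" "E y x'"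
            have ii: "i' = i" using uniq h by blast
            show "l = Suc i' \<or> i' = Suc l"
            proof (rule ccontr)
              assume hn: "\<not> (l = Suc i' \<or> i' = Suc l)"
              have "l = e i" using C[OF i y(1,2) h(3,4,5)] hn ii by auto
              then have "x' = x" using h(4) x(2) by simp
              then show False using h(5) y(3) symE by blast
            qed
          qed
          then show ?thesis using y by blast
        next
          case False
          obtain y where y: "y \<in> B" "y \<in> Y" using nY by blast
          have "good B y" unfolding good_def
          proof (intro allI impI)
            fix i' l x' assume h: "i' \<le> k" "ps!i' = Inr B" "l \<le> k" "ps!l = Inl x'" "E y x'"
            have ii: "i' = i" using uniq h by blast
            show "l = Suc i' \<or> i' = Suc l"
            proof (rule ccontr)
              assume hn: "\<not> (l = Suc i' \<or> i' = Suc l)"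
              have "l = e i" using C[OF i y(1,2) h(3,4,5)] hn ii by auto
              then show False using False h hn ii by auto
            qed
          qed
          then show ?thesis using y by blast
        qed
      qed
    qed
    then have "\<forall>B\<in>MB. \<exists>y. y \<in> B \<and> y \<in> Y \<and> good B y" by blast
    then obtain c where c: "\<forall>B\<in>MB. c B \<in> B \<and> c B \<in> Y \<and> good B (c B)" by (metis bchoice)
    define g where "g w = (case w of Inl x \<Rightarrow> x | Inr B \<Rightarrow> c B)" for w
    have hom: "E (g u) (g w)" if "EH u w" for u w
    proof -
      from that obtain x B where xB: "(u = Inl x \<and> w = Inr B) \<or> (u = Inr B \<and> w = Inl x)" "x \<in> X" "B \<in> MB" "x \<in> B"
        by (auto simp: GA)
      have "E x (c B)" using bic_E[OF xB(3) xB(4) xB(2)] c xB(3) by blast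
      then show ?thesis using xB(1) symE by (auto simp: g_def)
    qed
    have gV: "g ` VH \<subseteq> X \<union> Y" using c by (auto simp: g_def)
    define ps' where "ps' = map g ps"
    have len': "length ps' = Suc k" using len by (simp add: ps'_def)
    have nth': "\<And>i. i \<le> k \<Longrightarrow> ps'!i = g (ps!i)" using len by (simp add: ps'_def)
    have cgood: "\<And>i l B x. i \<le> k \<Longrightarrow> ps!i = Inr B \<Longrightarrow> l \<le> k \<Longrightarrow> ps!l = Inl x \<Longrightarrow> E (c B) x \<Longrightarrow> l = Suc i \<or> i = Suc l"
      using c inMB unfolding good_def by blast
    have neq: "g (ps!i) \<noteq> g (ps!j)" if "i < j" "j \<le> k" for i j
    proof (cases "ps!i")
      case (Inl a)
      show ?thesis
      proof (cases "ps!j")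
        case (Inl b) then show ?thesis using \<open>ps!i = Inl a\<close> dst[of i j] that by (auto simp: g_def)
      next
        case (Inr B) then show ?thesis using \<open>ps!i = Inl a\<close> inX[of i a] inMB[of j B] c disj that by (auto simp: g_def)
      qed
    next
      case (Inr B)
      show ?thesis
      proof (cases "ps!j")
        case (Inl b) then show ?thesis using \<open>ps!i = Inr B\<close> inX[of j b] inMB[of i B] c disj that by (auto simp: g_def)
      next
        case (Inr B')
        show ?thesis
        proof
          assume eq: "g (ps!i) = g (ps!j)"
          then have cc: "c B = c B'" using Inr \<open>ps!i = Inr B\<close> by (simp add: g_def)
          have B: "B \<in> MB" "B' \<in> MB" using inMB[of i B] inMB[of j B'] that Inr \<open>ps!i = Inr B\<close> by auto
          have ik: "i < k" using that by auto
          obtain x1 where x1: "ps!Suc i = Inl x1" "x1 \<in> X" "x1 \<in> B" using nbrR[OF ik \<open>ps!i = Inr B\<close>] by blast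
          have "E x1 (c B)" using bic_E[OF B(1) x1(3) x1(2)] c B by blast
          then have "E (c B') x1" using cc symE by metis
          then have "Suc i = Suc j \<or> j = Suc (Suc i)" using cgood[of j B' "Suc i" x1] Inr x1 that by auto
          then have j2: "j = i + 2" using that by auto
          have jk: "j = k"
          proof (rule ccontr)
            assume "j \<noteq> k" then have jk': "j < k" using that by auto
            obtain x2 where x2: "ps!Suc j = Inl x2" "x2 \<in> X" "x2 \<in> B'" using nbrR[OF jk' Inr] by blast
            have "E x2 (c B')" using bic_E[OF B(2) x2(3) x2(2)] c B by blast
            then have "E (c B) x2" using cc symE by metis
            then have "Suc j = Suc i \<or> i = Suc (Suc j)" using cgood[of i B "Suc j" x2] \<open>ps!i = Inr B\<close> x2 jk' that by auto
            then show False using that by auto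
          qed
          have i0: "i = 0"
          proof (rule ccontr)
            assume "i \<noteq> 0" then have i0: "0 < i" by auto
            obtain x0 where x0: "ps!(i-1) = Inl x0" "x0 \<in> X" "x0 \<in> B" using nbrL[OF i0 _ \<open>ps!i = Inr B\<close>] \<open>i < j\<close> \<open>j \<le> k\<close> by auto
            have "E x0 (c B)" using bic_E[OF B(1) x0(3) x0(2)] c B by blast
            then have "E (c B') x0" using cc symE by metis
            then have "i - 1 = Suc j \<or> j = Suc (i - 1)" using cgood[of j B' "i-1" x0] Inr x0 that by auto
            then show False using that i0 by auto
          qed
          show False using j2 jk i0 k3 by auto
        qed
      qed
    qed
    have ip': "ipath E (X \<union> Y) ps'" unfolding ipath_def
    proof (intro conjI allI impI)
      show "ps' \<noteq> []" using len' by auto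
      have "set ps' \<subseteq> X \<union> Y"
      proof -
        have "set ps \<subseteq> VH" using ip unfolding ipath_def lw_def by auto
        then have "g ` set ps \<subseteq> X \<union> Y" using gV by (meson image_mono order_trans)
        then show ?thesis by (simp add: ps'_def)
      qed
      moreover have "E (ps'!i) (ps'!Suc i)" if "Suc i < length ps'" for i
        using hom[OF edge[of i]] nth'[of i] nth'[of "Suc i"] that len' by auto
      ultimately show "lw E (X \<union> Y) ps'" unfolding lw_def by blast
      show "distinct ps'" unfolding distinct_conv_nth
      proof (intro allI impI)
        fix i j assume h: "i < length ps'" "j < length ps'" "i \<noteq> j"
        then consider "i < j" | "j < i" by linarith
        then show "ps'!i \<noteq> ps'!j"
        proof cases
          case 1 then show ?thesis using neq[of i j] h nth' len' by auto
        next
          case 2 then show ?thesis using neq[of j i] h nth' len' by auto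
        qed
      qed
    next
      fix a b assume h: "a < length ps'" "b < length ps'" "E (ps'!a) (ps'!b)"
      have ak: "a \<le> k" "b \<le> k" using h len' by auto
      have Eg: "E (g (ps!a)) (g (ps!b))" using h nth' ak by auto
      show "a = Suc b \<or> b = Suc a"
      proof (cases "ps!a")
        case (Inl x)
        show ?thesis
        proof (cases "ps!b")
          case (Inl x')
          have "x \<in> X" "x' \<in> X" using inX ak Inl \<open>ps!a = Inl x\<close> by auto
          moreover have "E x x'" using Eg Inl \<open>ps!a = Inl x\<close> by (simp add: g_def)
          ultimately show ?thesis using sideE disj by blast
        next
          case (Inr B)
          have "E (c B) x" using Eg Inr \<open>ps!a = Inl x\<close> symE by (simp add: g_def)
          then show ?thesis using cgood[of b B a x] ak Inr \<open>ps!a = Inl x\<close> by auto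
        qed
      next
        case (Inr B)
        show ?thesis
        proof (cases "ps!b")
          case (Inl x)
          have "E (c B) x" using Eg Inl \<open>ps!a = Inr B\<close> by (simp add: g_def)
          then show ?thesis using cgood[of a B b x] ak Inl \<open>ps!a = Inr B\<close> by auto
        next
          case (Inr B')
          have "c B \<in> Y" "c B' \<in> Y" using c inMB ak Inr \<open>ps!a = Inr B\<close> by auto
          moreover have "E (c B) (c B')" using Eg Inr \<open>ps!a = Inr B\<close> by (simp add: g_def)
          ultimately show ?thesis using sideE disj by blast
        qed
      qed
    qed
    have "wk E (X \<union> Y) (g (ps!0)) (g (ps!k)) m"
      by (rule wk_hom[OF wm]) (use hom gV in auto)
    then have "wk E (X \<union> Y) (ps'!0) (ps'!(length ps' - 1)) m" using nth' len' by auto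
    from L3[OF dh symE ip' this] show ?thesis using len' len by auto
  qed
qed

end


context GG
begin

lemma HDH: "distance_hereditary VH EH"
  unfolding distance_hereditary_def
proof (intro allI impI ballI)
  fix S u v assume S: "S \<subseteq> VH" and conn: "connected_in EH S" and uv: "u \<in> S" "v \<in> S"
  have ex: "\<exists>n. wk EH S u v n" using conn uv unfolding connected_in_def walk_len_wk by blast
  define n where "n = (LEAST n. wk EH S u v n)"
  have wn: "wk EH S u v n" unfolding n_def using ex by (rule LeastI_ex)
  have mn: "\<forall>m<n. \<not> wk EH S u v m" unfolding n_def using not_less_Least by blast
  obtain ps where ps: "length ps = Suc n" "ps!0 = u" "ps!n = v" "lw EH S ps"
    using wn unfolding walk_len_wk[symmetric] walk_len_lw by blast
  have "ipath EH S ps" using SC[OF EH_sym EH_nl ps(4) ps(1)] mn ps(2,3) by simp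
  then have ip: "ipath EH VH ps" using S unfolding ipath_def lw_def by blast
  have lb: "n \<le> m" if "wk EH VH u v m" for m using MH[OF ip] that ps by simp
  have "dist_in EH VH u v = n" unfolding dist_in_def walk_len_wk
    by (rule Least_equality) (use wk_mono[OF wn S] lb in auto)
  moreover have "dist_in EH S u v = n" unfolding dist_in_def walk_len_wk n_def ..
  ultimately show "dist_in EH S u v = dist_in EH VH u v" by simp
qed

lemma HBDH: "BDH (Inl ` X) (Inr ` MB) EH"
  unfolding BDH_def bipartite_graph_def
  using HDH finX finMB EH_sym by (auto simp: GA)

end

lemma BDH_swap: "BDH X Y E \<Longrightarrow> BDH Y X E"
  unfolding BDH_def bipartite_graph_def by (auto simp: Un_commute)

lemma mb_swap: "\<forall>u v. E u v \<longrightarrow> E v u \<Longrightarrow> max_bicliques Y X E = max_bicliques X Y E"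
proof -
  assume s: "\<forall>u v. E u v \<longrightarrow> E v u"
  have "biclique Y X E B = biclique X Y E B" for B
    unfolding biclique_def using s by blast
  then show ?thesis unfolding max_bicliques_def by simp
qed

theorem corollary1:
  fixes X Y :: "'a set" and E :: "'a \<Rightarrow> 'a \<Rightarrow> bool"
  assumes "BDH X Y E"
    and "\<forall>v\<in>X \<union> Y. \<not> universal_vertex X Y E v"
  shows "BDH (Inl ` X) (Inr ` max_bicliques X Y E)
           (Gamma_adj X (max_bicliques X Y E) (\<lambda>B. B \<inter> X))
       \<and> BDH (Inl ` Y) (Inr ` max_bicliques X Y E)
           (Gamma_adj Y (max_bicliques X Y E) (\<lambda>B. B \<inter> Y))"
proof
  have g1: "GG X Y E" using assms(1) unfolding BDH_def GG_def by blast
  show "BDH (Inl ` X) (Inr ` max_bicliques X Y E) (Gamma_adj X (max_bicliques X Y E) (\<lambda>B. B \<inter> X))"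
    by (rule GG.HBDH[OF g1])
  have g2: "GG Y X E" using BDH_swap[OF assms(1)] unfolding BDH_def GG_def by blast
  have s: "\<forall>u v. E u v \<longrightarrow> E v u" using assms(1) unfolding BDH_def bipartite_graph_def by blast
  show "BDH (Inl ` Y) (Inr ` max_bicliques X Y E) (Gamma_adj Y (max_bicliques X Y E) (\<lambda>B. B \<inter> Y))"
    using GG.HBDH[OF g2] mb_swap[OF s] by simp
qed


end
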